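(* Let $\mathcal{A}$ be a weighted pushdown system. There exists an infinite path $\pi$ from the initial configuration with $\mathrm{LimInfAvg}(\pi)\geq 0$ if and only if for every $\epsilon>0$ there exists an infinite path $\pi_\epsilon$ from the initial configuration with $\mathrm{LimInfAvg}(\pi_\epsilon)>-\epsilon$.
   Context: A weighted pushdown system (WPS) is $\mathcal{A}=\langle Q,\Gamma,q_0,E,w\rangle$ with finite states $Q$, finite stack alphabet $\Gamma\ni\bot$ ($\bot$ never pushed or popped), edges $E\subseteq(Q\times\Gamma)\times(Q\times\mathrm{Com}(\Gamma))$ with $\mathrm{Com}(\Gamma)=\{\mathit{skip},\mathit{pop}\}\cup\{\mathit{push}(z)\}$, weights $w:E\to\mathbb{Z}$; initial configuration $(\bot,q_0)$; successor of $(\alpha,q)$ via edge $(q,\mathrm{Top}(\alpha),q',\mathit{com})$ is $(\mathit{com}(\alpha),q')$. For an infinite path $\pi$, $\mathrm{LimInfAvg}(\pi)=\liminf_i w(\pi[0,i])/i$ where $w(\pi[0,i])$ is the total weight of the first $i$ edges. *)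

theory Defs
  imports "HOL-Analysis.Analysis"
begin

datatype 'g com = Skip | Pop | Push 'g

record ('q, 'g) wps =
  states :: "'q set"
  alph   :: "'g set"
  bot    :: 'g
  init   :: 'q
  edges  :: "(('q \<times> 'g) \<times> ('q \<times> 'g com)) set"
  weight :: "(('q \<times> 'g) \<times> ('q \<times> 'g com)) \<Rightarrow> int"

definition wf_wps :: "('q, 'g) wps \<Rightarrow> bool" where
  "wf_wps A \<longleftrightarrow> finite (states A) \<and> finite (alph A) \<and> bot A \<in> alph A \<and>
     init A \<in> states A \<and>
     (\<forall>((q, g), (q', c)) \<in> edges A. q \<in> states A \<and> g \<in> alph A \<and> q' \<in> states A \<and>
        (case c of Skip \<Rightarrow> True
                 | Pop \<Rightarrow> g \<noteq> bot A
                 | Push z \<Rightarrow> z \<in> alph A \<and> z \<noteq> bot A))"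

text \<open>Stacks are lists with the top at the head; the initial stack is [bot].\<close>
fun apply_com :: "'g com \<Rightarrow> 'g list \<Rightarrow> 'g list" where
  "apply_com Skip s = s"
| "apply_com Pop s = tl s"
| "apply_com (Push z) s = z # s"

type_synonym ('q, 'g) config = "'g list \<times> 'q"

definition init_config :: "('q, 'g) wps \<Rightarrow> ('q, 'g) config" where
  "init_config A = ([bot A], init A)"

definition is_path :: "('q, 'g) wps \<Rightarrow> (nat \<Rightarrow> ('q, 'g) config)
      \<Rightarrow> (nat \<Rightarrow> ('q \<times> 'g) \<times> ('q \<times> 'g com)) \<Rightarrow> bool" where
  "is_path A c e \<longleftrightarrow> c 0 = init_config A \<and>
     (\<forall>i. e i \<in> edges A \<and>
          fst (fst (e i)) = snd (c i) \<and> snd (fst (e i)) = hd (fst (c i)) \<and>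
          c (Suc i) = (apply_com (snd (snd (e i))) (fst (c i)), fst (snd (e i))))"

definition path_weight :: "('q, 'g) wps \<Rightarrow> (nat \<Rightarrow> ('q \<times> 'g) \<times> ('q \<times> 'g com)) \<Rightarrow> nat \<Rightarrow> int" where
  "path_weight A e i = (\<Sum>j<i. weight A (e j))"

definition LimInfAvg :: "('q, 'g) wps \<Rightarrow> (nat \<Rightarrow> ('q \<times> 'g) \<times> ('q \<times> 'g com)) \<Rightarrow> ereal" where
  "LimInfAvg A e = liminf (\<lambda>i. ereal (real_of_int (path_weight A e i) / real i))"

end

theory Submission
  imports Defs
begin


definition src_ok :: "('q, 'g) wps \<Rightarrow> (nat \<Rightarrow> ('q, 'g) config)
      \<Rightarrow> (nat \<Rightarrow> ('q \<times> 'g) \<times> ('q \<times> 'g com)) \<Rightarrow> bool" where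
  "src_ok A c e \<longleftrightarrow> fst (c 0) \<noteq> [] \<and> (\<forall>m. length (fst (c 0)) \<le> length (fst (c m))) \<and>
     (\<forall>i. e i \<in> edges A \<and>
          fst (fst (e i)) = snd (c i) \<and> snd (fst (e i)) = hd (fst (c i)) \<and>
          c (Suc i) = (apply_com (snd (snd (e i))) (fst (c i)), fst (snd (e i))))"

lemma apply_com_append: "Y \<noteq> [] \<Longrightarrow> apply_com x (Y @ R) = apply_com x Y @ R"
  by (cases x) auto

lemma src_step:
  assumes "src_ok A c e" "fst (c m) = Y @ tl (fst (c 0))" "Y \<noteq> []"
  shows "fst (c (Suc m)) = apply_com (snd (snd (e m))) Y @ tl (fst (c 0)) \<and>
         apply_com (snd (snd (e m))) Y \<noteq> []"
proof -
  have c0: "fst (c 0) \<noteq> []" and len: "length (fst (c 0)) \<le> length (fst (c (Suc m)))"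
    and succ: "c (Suc m) = (apply_com (snd (snd (e m))) (fst (c m)), fst (snd (e m)))"
    using assms(1) unfolding src_ok_def by blast+
  have eq: "fst (c (Suc m)) = apply_com (snd (snd (e m))) Y @ tl (fst (c 0))"
    using succ assms(2,3) by (simp add: apply_com_append)
  moreover have "apply_com (snd (snd (e m))) Y \<noteq> []"
  proof (cases "snd (snd (e m))")
    case Pop
    have "length (fst (c 0)) = Suc (length (tl (fst (c 0))))" using c0 by (cases "fst (c 0)") auto
    moreover have "length (fst (c (Suc m))) = length (tl Y) + length (tl (fst (c 0)))"
      using eq Pop by simp
    ultimately show ?thesis using len Pop by (cases "tl Y") auto
  qed (use assms(3) in auto)
  ultimately show ?thesis by blast
qed

lemma path_weight_Suc: "path_weight A e (Suc i) = path_weight A e i + weight A (e i)"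
  by (simp add: path_weight_def)

lemma path_weight_0[simp]: "path_weight A e 0 = 0"
  by (simp add: path_weight_def)

fun gpos :: "(nat \<Rightarrow> nat) \<Rightarrow> nat \<Rightarrow> nat \<times> nat" where
  "gpos l 0 = (0, 0)"
| "gpos l (Suc t) = (case gpos l t of (k, m) \<Rightarrow> if Suc m < l k then (k, Suc m) else (Suc k, 0))"

primrec gC :: "('q, 'g) wps \<Rightarrow> (nat \<Rightarrow> ('q \<times> 'g) \<times> ('q \<times> 'g com)) \<Rightarrow> nat \<Rightarrow> ('q, 'g) config" where
  "gC A E 0 = init_config A"
| "gC A E (Suc t) = (apply_com (snd (snd (E t))) (fst (gC A E t)), fst (snd (E t)))"

definition gE where "gE es l t = (case gpos l t of (k, m) \<Rightarrow> es k m)"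

lemma glue_inv:
  assumes src: "\<And>k. src_ok A (cs k) (es k)" and lpos: "\<And>k. l k > 0"
    and init: "cs 0 0 = init_config A"
    and bnd: "\<And>k. snd (cs k (l k)) = snd (cs (Suc k) 0) \<and> hd (fst (cs k (l k))) = hd (fst (cs (Suc k) 0))"
  shows "case gpos l t of (k, m) \<Rightarrow> m < l k \<and> t = (\<Sum>j<k. l j) + m \<and>
     path_weight A (gE es l) t = (\<Sum>j<k. path_weight A (es j) (l j)) + path_weight A (es k) m \<and>
     (\<exists>Y R. fst (cs k m) = Y @ tl (fst (cs k 0)) \<and> Y \<noteq> [] \<and> fst (gC A (gE es l) t) = Y @ R
        \<and> snd (gC A (gE es l) t) = snd (cs k m))"
proof (induction t)
  case 0
  have "fst (cs 0 0) = [bot A]" using init by (simp add: init_config_def)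
  then show ?case using lpos[of 0] init
    by (auto simp: init_config_def intro!: exI[of _ "[bot A]"])
next
  case (Suc t)
  obtain k m where p: "gpos l t = (k, m)" by fastforce
  from Suc.IH p obtain Y R where ml: "m < l k" and tt: "t = (\<Sum>j<k. l j) + m"
    and ww: "path_weight A (gE es l) t = (\<Sum>j<k. path_weight A (es j) (l j)) + path_weight A (es k) m"
    and Y: "fst (cs k m) = Y @ tl (fst (cs k 0))" "Y \<noteq> []"
    and st: "fst (gC A (gE es l) t) = Y @ R" and sn: "snd (gC A (gE es l) t) = snd (cs k m)"
    by auto
  have Et: "gE es l t = es k m" using p by (simp add: gE_def)
  define Y' where "Y' = apply_com (snd (snd (es k m))) Y"
  have step: "fst (cs k (Suc m)) = Y' @ tl (fst (cs k 0))" "Y' \<noteq> []"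
    using src_step[OF src Y] by (auto simp: Y'_def)
  have succ: "cs k (Suc m) = (apply_com (snd (snd (es k m))) (fst (cs k m)), fst (snd (es k m)))"
    using src[of k] unfolding src_ok_def by blast
  have gst: "fst (gC A (gE es l) (Suc t)) = Y' @ R"
    using st Y(2) Et by (simp add: Y'_def apply_com_append)
  have gsn: "snd (gC A (gE es l) (Suc t)) = snd (cs k (Suc m))"
    using Et succ by simp
  have wS: "path_weight A (gE es l) (Suc t) = (\<Sum>j<k. path_weight A (es j) (l j)) + path_weight A (es k) (Suc m)"
    using ww Et by (simp add: path_weight_Suc)
  show ?case
  proof (cases "Suc m < l k")
    case True
    then show ?thesis using p tt wS step gst gsn by auto
  next
    case False
    hence lk: "l k = Suc m" using ml by simp
    define g where "g = hd (fst (cs (Suc k) 0))"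
    have ne: "fst (cs (Suc k) 0) \<noteq> []" using src[of "Suc k"] unfolding src_ok_def by blast
    have hdY': "hd Y' = g"
      using bnd[of k] step lk by (simp add: g_def)
    have c1: "fst (cs (Suc k) 0) = [g] @ tl (fst (cs (Suc k) 0))" using ne by (simp add: g_def)
    have c2: "fst (gC A (gE es l) (Suc t)) = [g] @ (tl Y' @ R)"
      using gst hdY' step(2) by (cases Y') auto
    have c3: "snd (gC A (gE es l) (Suc t)) = snd (cs (Suc k) 0)" using gsn bnd[of k] lk by simp
    have ex: "\<exists>Y R. fst (cs (Suc k) 0) = Y @ tl (fst (cs (Suc k) 0)) \<and> Y \<noteq> [] \<and>
        fst (gC A (gE es l) (Suc t)) = Y @ R \<and> snd (gC A (gE es l) (Suc t)) = snd (cs (Suc k) 0)"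
      using c1 c2 c3 by blast
    have "Suc t = (\<Sum>j<Suc k. l j) + 0" using tt lk by simp
    moreover have "path_weight A (gE es l) (Suc t) = (\<Sum>j<Suc k. path_weight A (es j) (l j)) + path_weight A (es (Suc k)) 0"
      using wS lk by simp
    moreover have "gpos l (Suc t) = (Suc k, 0)" using p False by simp
    ultimately show ?thesis using lpos[of "Suc k"] ex by (simp only: prod.case)
  qed
qed



lemma glue_path:
  assumes src: "\<And>k. src_ok A (cs k) (es k)" and lpos: "\<And>k. l k > 0"
    and init: "cs 0 0 = init_config A"
    and bnd: "\<And>k. snd (cs k (l k)) = snd (cs (Suc k) 0) \<and> hd (fst (cs k (l k))) = hd (fst (cs (Suc k) 0))"
  shows "is_path A (gC A (gE es l)) (gE es l)"
  unfolding is_path_def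
proof (intro conjI allI)
  show "gC A (gE es l) 0 = init_config A" by simp
  fix i
  obtain k m where p: "gpos l i = (k, m)" by fastforce
  from glue_inv[OF src lpos init bnd, of i] p obtain Y R where
    Y: "fst (cs k m) = Y @ tl (fst (cs k 0))" "Y \<noteq> []"
    and st: "fst (gC A (gE es l) i) = Y @ R" and sn: "snd (gC A (gE es l) i) = snd (cs k m)"
    by auto
  have Et: "gE es l i = es k m" using p by (simp add: gE_def)
  have s: "es k m \<in> edges A \<and> fst (fst (es k m)) = snd (cs k m) \<and> snd (fst (es k m)) = hd (fst (cs k m))"
    using src[of k] unfolding src_ok_def by blast
  show "gE es l i \<in> edges A" using s Et by simp
  show "fst (fst (gE es l i)) = snd (gC A (gE es l) i)" using s Et sn by simp
  show "snd (fst (gE es l i)) = hd (fst (gC A (gE es l) i))" using s Et st Y by simp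
  show "gC A (gE es l) (Suc i) = (apply_com (snd (snd (gE es l i))) (fst (gC A (gE es l) i)), fst (snd (gE es l i)))"
    by simp
qed

lemma stack_inv:
  assumes "wf_wps A" "is_path A c e"
  shows "\<exists>Y. fst (c i) = Y @ [bot A]"
proof (induction i)
  case 0 then show ?case using assms(2) by (auto simp: is_path_def init_config_def)
next
  case (Suc i)
  then obtain Y where Y: "fst (c i) = Y @ [bot A]" by blast
  have e: "e i \<in> edges A" "snd (fst (e i)) = hd (fst (c i))"
     "c (Suc i) = (apply_com (snd (snd (e i))) (fst (c i)), fst (snd (e i)))"
    using assms(2) unfolding is_path_def by blast+
  obtain q g q' x where ei: "e i = ((q, g), (q', x))" by (metis prod.collapse)
  have pop: "x = Pop \<Longrightarrow> g \<noteq> bot A" using assms(1) e(1) ei unfolding wf_wps_def by fastforce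
  show ?case
  proof (cases x)
    case Skip then show ?thesis using e(3) ei Y by auto
  next
    case (Push z) then show ?thesis using e(3) ei Y by auto
  next
    case Pop
    then have "Y \<noteq> []" using pop e(2) ei Y by auto
    then show ?thesis using e(3) ei Y Pop by (cases Y) auto
  qed
qed

lemma stack_len:
  assumes "wf_wps A" "is_path A c e"
  shows "1 \<le> length (fst (c i))" "fst (c 0) = [bot A]"
  using stack_inv[OF assms, of i] apply auto[1]
  using assms(2) by (auto simp: is_path_def init_config_def)

definition isstep :: "(nat \<Rightarrow> ('q, 'g) config) \<Rightarrow> nat \<Rightarrow> bool" where
  "isstep c a \<longleftrightarrow> (\<forall>k\<ge>a. length (fst (c a)) \<le> length (fst (c k)))"

lemma steps_infinite: "infinite {a. isstep c a}"
  unfolding infinite_nat_iff_unbounded_le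
proof
  fix i
  define h where "h = (LEAST x. \<exists>k\<ge>i. length (fst (c k)) = x)"
  have "\<exists>k\<ge>i. length (fst (c k)) = h" unfolding h_def by (rule LeastI_ex) blast
  then obtain a where a: "a \<ge> i" "length (fst (c a)) = h" by blast
  have "isstep c a" unfolding isstep_def
  proof (intro allI impI)
    fix k assume "a \<le> k"
    then have "\<exists>k'\<ge>i. length (fst (c k')) = length (fst (c k))" using a by (intro exI[of _ k]) auto
    then show "length (fst (c a)) \<le> length (fst (c k))" unfolding a(2) h_def by (rule Least_le)
  qed
  then show "\<exists>j\<ge>i. j \<in> {a. isstep c a}" using a by blast
qed

lemma src_from_path:
  assumes "wf_wps A" "is_path A c e" "isstep c a"
  shows "src_ok A (\<lambda>m. c (a + m)) (\<lambda>m. e (a + m))"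
  unfolding src_ok_def
proof (intro conjI allI)
  show "fst (c (a + 0)) \<noteq> []" using stack_len(1)[OF assms(1,2), of a] by auto
  fix m
  show "length (fst (c (a + 0))) \<le> length (fst (c (a + m)))" using assms(3) unfolding isstep_def by simp
  fix i
  show "e (a + i) \<in> edges A" "fst (fst (e (a + i))) = snd (c (a + i))" "snd (fst (e (a + i))) = hd (fst (c (a + i)))"
       "c (a + Suc i) = (apply_com (snd (snd (e (a + i)))) (fst (c (a + i))), fst (snd (e (a + i))))"
    using assms(2) unfolding is_path_def by auto
qed

lemma lower_bound:
  assumes "LimInfAvg A e > ereal (- \<epsilon>)" "\<epsilon> \<ge> 0"
  shows "\<exists>D\<ge>0. \<forall>m. real_of_int (path_weight A e m) \<ge> - \<epsilon> * m - D"
proof -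
  have "eventually (\<lambda>i. ereal (real_of_int (path_weight A e i) / real i) > ereal (- \<epsilon>)) sequentially"
    using assms(1) unfolding LimInfAvg_def by (rule less_LiminfD)
  then obtain N where N: "\<And>i. i \<ge> N \<Longrightarrow> real_of_int (path_weight A e i) / real i > - \<epsilon>"
    unfolding eventually_sequentially by auto
  define D where "D = (\<Sum>i<N. \<bar>real_of_int (path_weight A e i)\<bar>)"
  have "D \<ge> 0" unfolding D_def by (simp add: sum_nonneg)
  moreover have "real_of_int (path_weight A e m) \<ge> - \<epsilon> * m - D" for m
  proof (cases "m < N")
    case True
    have "\<bar>real_of_int (path_weight A e m)\<bar> \<le> D" unfolding D_def
      by (rule member_le_sum) (use True in auto)
    moreover have "\<epsilon> * m \<ge> 0" using assms(2) by simp
    ultimately show ?thesis by linarith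
  next
    case False
    show ?thesis
    proof (cases "m = 0")
      case True then show ?thesis using \<open>D \<ge> 0\<close> by simp
    next
      case m0: False
      have "real_of_int (path_weight A e m) / real m > - \<epsilon>" using N False by simp
      then have "real_of_int (path_weight A e m) > - \<epsilon> * m" using m0 by (simp add: field_simps)
      then show ?thesis using \<open>D \<ge> 0\<close> by linarith
    qed
  qed
  ultimately show ?thesis by blast
qed



lemma analytic:
  fixes l :: "nat \<Rightarrow> nat" and D :: "nat \<Rightarrow> real" and pw :: "nat \<Rightarrow> nat \<Rightarrow> real" and W :: "nat \<Rightarrow> real"
  assumes Dnn: "\<And>j. D j \<ge> 0"
    and pwb: "\<And>j x. pw j x \<ge> - (real x / real (Suc j)) - D j"
    and lb: "\<And>k. real (l k) \<ge> real (Suc k) * (\<Sum>j<Suc (Suc k). D j)"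
    and Wt: "\<And>t. \<exists>k m. m < l k \<and> t = (\<Sum>j<k. l j) + m \<and> W t = (\<Sum>j<k. pw j (l j)) + pw k m"
    and dpos: "\<delta> > 0"
  shows "eventually (\<lambda>t. W t \<ge> - \<delta> * real t) sequentially"
proof -
  define K where "K = nat \<lceil>3 / \<delta>\<rceil> + 1"
  have K1: "K \<ge> 1" unfolding K_def by simp
  have K3: "real K \<ge> 3 / \<delta>" unfolding K_def by linarith
  have Kd: "1 / real K \<le> \<delta> / 3" using K3 K1 dpos by (simp add: field_simps)
  have epsj: "1 / real (Suc j) \<le> \<delta> / 3" if "j \<ge> K" for j
  proof -
    have "1 / real (Suc j) \<le> 1 / real K" using that K1 by (simp add: frac_le)
    then show ?thesis using Kd by linarith
  qed
  define P where "P = (\<Sum>j<K. real (l j) / real (Suc j))"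
  have Pnn: "P \<ge> 0" unfolding P_def by (simp add: sum_nonneg)
  define N0 where "N0 = max (\<Sum>j<K. l j) (nat \<lceil>3 * P / \<delta>\<rceil>)"
  show ?thesis unfolding eventually_sequentially
  proof (intro exI[of _ N0] allI impI)
    fix t assume tN: "t \<ge> N0"
    obtain k m where km: "m < l k" "t = (\<Sum>j<k. l j) + m" "W t = (\<Sum>j<k. pw j (l j)) + pw k m"
      using Wt by blast
    have kK: "k \<ge> K"
    proof (rule ccontr)
      assume "\<not> K \<le> k"
      then have "Suc k \<le> K" by simp
      then have "(\<Sum>j<Suc k. l j) \<le> (\<Sum>j<K. l j)" by (intro sum_mono2) auto
      then show False using km tN unfolding N0_def by simp
    qed
    have tP: "real t \<ge> 3 * P / \<delta>" using tN unfolding N0_def by linarith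
    have b1: "W t \<ge> - ((\<Sum>j<k. real (l j) / real (Suc j)) + real m / real (Suc k)) - (\<Sum>j<Suc k. D j)"
    proof -
      have "(\<Sum>j<k. pw j (l j)) \<ge> (\<Sum>j<k. - (real (l j) / real (Suc j)) - D j)"
        by (intro sum_mono pwb)
      moreover have "pw k m \<ge> - (real m / real (Suc k)) - D k" by (rule pwb)
      ultimately show ?thesis using km(3) by (simp add: sum_subtractf sum_negf)
    qed
    obtain k' where k': "k = Suc k'" using kK K1 by (cases k) auto
    have lk': "real (l k') \<ge> real k * (\<Sum>j<Suc k. D j)" using lb[of k'] k' by simp
    have "l k' \<le> (\<Sum>j<k. l j)" using k' by (intro member_le_sum) auto
    then have lt: "real (l k') \<le> real t" using km(2) by (simp del: of_nat_sum)
    have Dsum: "(\<Sum>j<Suc k. D j) \<le> \<delta> / 3 * real t"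
    proof -
      have ks: "real k \<ge> real K" using kK by simp
      have "real K * (\<Sum>j<Suc k. D j) \<le> real k * (\<Sum>j<Suc k. D j)"
        using ks by (intro mult_right_mono) (simp_all add: sum_nonneg Dnn)
      then have "real K * (\<Sum>j<Suc k. D j) \<le> real t" using lk' lt by linarith
      then have "(\<Sum>j<Suc k. D j) \<le> real t / real K" using K1 by (simp add: field_simps)
      also have "\<dots> = real t * (1 / real K)" by simp
      also have "\<dots> \<le> real t * (\<delta> / 3)" using Kd by (intro mult_left_mono) auto
      finally show ?thesis by (simp add: mult.commute)
    qed
    have split: "(\<Sum>j<k. real (l j) / real (Suc j)) = P + (\<Sum>j\<in>{K..<k}. real (l j) / real (Suc j))"
      unfolding P_def using kK by (simp add: lessThan_atLeast0 sum.atLeastLessThan_concat)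
    have tail: "(\<Sum>j\<in>{K..<k}. real (l j) / real (Suc j)) \<le> \<delta> / 3 * (\<Sum>j\<in>{K..<k}. real (l j))"
    proof -
      have "(\<Sum>j\<in>{K..<k}. real (l j) / real (Suc j)) \<le> (\<Sum>j\<in>{K..<k}. \<delta> / 3 * real (l j))"
      proof (rule sum_mono)
        fix j assume "j \<in> {K..<k}"
        then have "1 / real (Suc j) \<le> \<delta> / 3" using epsj by auto
        then have "real (l j) * (1 / real (Suc j)) \<le> real (l j) * (\<delta> / 3)" by (intro mult_left_mono) auto
        then show "real (l j) / real (Suc j) \<le> \<delta> / 3 * real (l j)" by (simp add: mult.commute)
      qed
      then show ?thesis by (simp add: sum_distrib_left)
    qed
    have mb: "real m / real (Suc k) \<le> \<delta> / 3 * real m"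
    proof -
      have "1 / real (Suc k) \<le> \<delta> / 3" using epsj kK by auto
      then have "real m * (1 / real (Suc k)) \<le> real m * (\<delta> / 3)" by (intro mult_left_mono) auto
      then show ?thesis by (simp add: mult.commute)
    qed
    have "(\<Sum>j\<in>{K..<k}. real (l j)) \<le> (\<Sum>j<k. real (l j))"
      by (intro sum_mono2) auto
    then have sl: "(\<Sum>j\<in>{K..<k}. real (l j)) + real m \<le> real t" using km(2) by simp
    have "\<delta> / 3 * ((\<Sum>j\<in>{K..<k}. real (l j)) + real m) \<le> \<delta> / 3 * real t"
      using sl dpos by (intro mult_left_mono) auto
    then have S1: "(\<Sum>j<k. real (l j) / real (Suc j)) + real m / real (Suc k) \<le> P + \<delta> / 3 * real t"
      using split tail mb by (simp add: distrib_left)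
    have "P \<le> \<delta> / 3 * real t" using tP dpos by (simp add: field_simps)
    then show "W t \<ge> - \<delta> * real t" using b1 S1 Dsum by linarith
  qed
qed



lemma path_weight_shift:
  "path_weight A (\<lambda>m. e (a + m)) x = path_weight A e (a + x) - path_weight A e a"
  by (induction x) (simp_all add: path_weight_Suc)

lemma shifted_bound:
  assumes "LimInfAvg A e > ereal (- \<epsilon>)" "0 \<le> \<epsilon>" "\<epsilon> \<le> \<epsilon>'"
  shows "\<exists>D\<ge>0. \<forall>x. real_of_int (path_weight A (\<lambda>m. e (a + m)) x) \<ge> - (real x * \<epsilon>') - D"
proof -
  obtain D0 where D0: "D0 \<ge> 0" "\<And>m. real_of_int (path_weight A e m) \<ge> - \<epsilon> * m - D0"
    using lower_bound[OF assms(1,2)] by blast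
  define D where "D = \<epsilon> * a + D0 + \<bar>real_of_int (path_weight A e a)\<bar>"
  have "D \<ge> 0" unfolding D_def using D0 assms by simp
  moreover have "real_of_int (path_weight A (\<lambda>m. e (a + m)) x) \<ge> - (real x * \<epsilon>') - D" for x
  proof -
    have "real x * \<epsilon> \<le> real x * \<epsilon>'" using assms by (intro mult_left_mono) auto
    moreover have "real_of_int (path_weight A e (a + x)) \<ge> - \<epsilon> * real (a + x) - D0" by (rule D0(2))
    ultimately show ?thesis unfolding path_weight_shift D_def by (simp add: algebra_simps)
  qed
  ultimately show ?thesis by blast
qed

lemma liminf_from_eventually:
  assumes "\<And>\<delta>. \<delta> > 0 \<Longrightarrow> eventually (\<lambda>t. real_of_int (path_weight A e t) \<ge> - \<delta> * real t) sequentially"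
  shows "LimInfAvg A e \<ge> 0"
  unfolding LimInfAvg_def le_Liminf_iff
proof (intro allI impI)
  fix y :: ereal assume y: "y < 0"
  show "eventually (\<lambda>x. y < ereal (real_of_int (path_weight A e x) / real x)) sequentially"
  proof (cases y)
    case (real r)
    then have r: "r < 0" using y by simp
    have ev: "eventually (\<lambda>t. real_of_int (path_weight A e t) \<ge> - (- r / 2) * real t) sequentially"
      using r by (intro assms) simp
    have ev1: "eventually (\<lambda>t. t \<ge> (1::nat)) sequentially" by (rule eventually_ge_at_top)
    show ?thesis using ev ev1
    proof eventually_elim
      case (elim t)
      then have "real_of_int (path_weight A e t) / real t \<ge> r / 2" by (simp add: field_simps)
      moreover have "r < r / 2" using r by simp
      ultimately have "r < real_of_int (path_weight A e t) / real t" by linarith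
      then show ?case using real by simp
    qed
  next
    case MInf then show ?thesis by simp
  next
    case PInf then show ?thesis using y by simp
  qed
qed



lemma hard_dir:
  fixes A :: "('q, 'g) wps"
  assumes wf: "wf_wps A"
    and H: "\<forall>\<epsilon>::real. \<epsilon> > 0 \<longrightarrow> (\<exists>c e. is_path A c e \<and> LimInfAvg A e > ereal (- \<epsilon>))"
  shows "\<exists>c e. is_path A c e \<and> LimInfAvg A e \<ge> 0"
proof -
  define PP where "PP n = (SOME ce. is_path A (fst ce) (snd ce) \<and> LimInfAvg A (snd ce) > ereal (- (1 / real (Suc n))))" for n
  define cn where "cn n = fst (PP n)" for n
  define en where "en n = snd (PP n)" for n
  have PPn: "is_path A (cn n) (en n) \<and> LimInfAvg A (en n) > ereal (- (1 / real (Suc n)))" for n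
  proof -
    have "\<exists>ce. is_path A (fst ce) (snd ce) \<and> LimInfAvg A (snd ce) > ereal (- (1 / real (Suc n)))"
      using H[rule_format, of "1 / real (Suc n)"] by auto
    then show ?thesis unfolding cn_def en_def PP_def by (rule someI_ex)
  qed
  have pth: "is_path A (cn n) (en n)" for n using PPn by blast
  define FT where "FT = fst ` edges A"
  have finFT: "finite FT"
  proof -
    have "FT \<subseteq> states A \<times> alph A" unfolding FT_def using wf unfolding wf_wps_def by fastforce
    moreover have "finite (states A \<times> alph A)" using wf unfolding wf_wps_def by simp
    ultimately show ?thesis by (rule finite_subset)
  qed
  have tyFT: "fst (en n a) \<in> FT" for n a using pth[of n] unfolding is_path_def FT_def by blast
  have tyeq: "fst (en n a) = (snd (cn n a), hd (fst (cn n a)))" for n a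
    using pth[of n] unfolding is_path_def by (metis prod.collapse)
  define TS where "TS n T = {a. isstep (cn n) a \<and> fst (en n a) = T}" for n T
  have exT: "\<exists>T. infinite (TS n T)" for n
  proof -
    have "finite ((\<lambda>a. fst (en n a)) ` {a. isstep (cn n) a})"
      by (rule finite_subset[OF _ finFT]) (use tyFT in auto)
    from pigeonhole_infinite[OF steps_infinite this] obtain a0 where
      "infinite {a \<in> {a. isstep (cn n) a}. fst (en n a) = fst (en n a0)}" by blast
    then have "infinite (TS n (fst (en n a0)))" unfolding TS_def by simp
    then show ?thesis by blast
  qed
  define TT where "TT n = (SOME T. infinite (TS n T))" for n
  have TTinf: "infinite (TS n (TT n))" for n unfolding TT_def using exT by (rule someI_ex)
  have TTFT: "TT n \<in> FT" for n
  proof -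
    from TTinf[of n] have "TS n (TT n) \<noteq> {}" by force
    then obtain a where "fst (en n a) = TT n" unfolding TS_def by blast
    then show ?thesis using tyFT by metis
  qed
  have "finite (TT ` (UNIV :: nat set))" by (rule finite_subset[OF _ finFT]) (use TTFT in auto)
  from pigeonhole_infinite[OF infinite_UNIV_nat this] obtain n0 where
    n0: "infinite {n \<in> UNIV. TT n = TT n0}" by blast
  define T where "T = TT n0"
  define NS where "NS = {n. TT n = T}"
  have NSinf: "infinite NS" using n0 unfolding NS_def T_def by simp
  define g where "g k = (SOME n. n \<in> NS \<and> k \<le> n)" for k
  have g: "g k \<in> NS \<and> k \<le> g k" for k
  proof -
    have "\<exists>n. n \<in> NS \<and> k \<le> n" using NSinf unfolding infinite_nat_iff_unbounded_le by blast
    then show ?thesis unfolding g_def by (rule someI_ex)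
  qed
  have Tsinf: "infinite (TS (g k) T)" for k using TTinf[of "g k"] g[of k] unfolding NS_def by simp
  define a where "a k = (if k = 0 then 0 else (SOME b. b \<in> TS (g k) T))" for k
  have aT: "a k \<in> TS (g k) T" if "k > 0" for k
  proof -
    have "\<exists>b. b \<in> TS (g k) T" using Tsinf[of k] by (metis ex_in_conv finite.emptyI)
    then have "(SOME b. b \<in> TS (g k) T) \<in> TS (g k) T" by (rule someI_ex)
    then show ?thesis unfolding a_def using that by simp
  qed
  have astep: "isstep (cn (g k)) (a k)" for k
  proof (cases "k = 0")
    case True
    have "isstep (cn (g k)) 0" unfolding isstep_def
      using stack_len[OF wf pth[of "g k"]] by simp
    then show ?thesis using True by (simp add: a_def)
  next
    case False then show ?thesis using aT[of k] unfolding TS_def by simp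
  qed
  define cs where "cs k m = cn (g k) (a k + m)" for k m
  define es where "es k m = en (g k) (a k + m)" for k m
  have src: "src_ok A (cs k) (es k)" for k
    unfolding cs_def es_def by (rule src_from_path[OF wf pth astep])
  have exD: "\<exists>D\<ge>0. \<forall>x. real_of_int (path_weight A (es j) x) \<ge> - (real x * (1 / real (Suc j))) - D" for j
    unfolding es_def
  proof (rule shifted_bound)
    show "LimInfAvg A (en (g j)) > ereal (- (1 / real (Suc (g j))))" using PPn by blast
    show "1 / real (Suc (g j)) \<le> 1 / real (Suc j)" using g[of j] by (simp add: frac_le)
  qed simp
  define D where "D j = (SOME D. D \<ge> 0 \<and> (\<forall>x. real_of_int (path_weight A (es j) x) \<ge> - (real x * (1 / real (Suc j))) - D))" for j
  have Dp: "D j \<ge> 0 \<and> (\<forall>x. real_of_int (path_weight A (es j) x) \<ge> - (real x * (1 / real (Suc j))) - D j)" for j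
    unfolding D_def using exD[of j] by (rule someI_ex)
  define B where "B k = real (Suc k) * (\<Sum>j<Suc (Suc k). D j)" for k
  define l where "l k = (SOME ll. ll > 0 \<and> real ll \<ge> B k \<and> a k + ll \<in> TS (g k) T)" for k
  have lp: "l k > 0 \<and> real (l k) \<ge> B k \<and> a k + l k \<in> TS (g k) T" for k
  proof -
    obtain b where b: "b \<in> TS (g k) T" "b \<ge> a k + 1 + nat \<lceil>B k\<rceil>"
      using Tsinf[of k] unfolding infinite_nat_iff_unbounded_le by blast
    have "b - a k > 0 \<and> real (b - a k) \<ge> B k \<and> a k + (b - a k) \<in> TS (g k) T"
      using b by (auto simp: of_nat_diff) linarith
    then show ?thesis unfolding l_def by (rule someI)
  qed
  have init: "cs 0 0 = init_config A" using pth unfolding cs_def a_def is_path_def by simp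
  have bnd: "snd (cs k (l k)) = snd (cs (Suc k) 0) \<and> hd (fst (cs k (l k))) = hd (fst (cs (Suc k) 0))" for k
  proof -
    have "fst (en (g k) (a k + l k)) = T" using lp[of k] unfolding TS_def by simp
    moreover have "fst (en (g (Suc k)) (a (Suc k))) = T" using aT[of "Suc k"] unfolding TS_def by simp
    ultimately show ?thesis unfolding cs_def using tyeq by (metis add_0_right prod.inject)
  qed
  define E where "E = gE es l"
  have path: "is_path A (gC A E) E" unfolding E_def
    by (rule glue_path[OF src _ init bnd]) (use lp in blast)
  have "LimInfAvg A E \<ge> 0"
  proof (rule liminf_from_eventually)
    fix \<delta> :: real assume dp: "\<delta> > 0"
    show "eventually (\<lambda>t. real_of_int (path_weight A E t) \<ge> - \<delta> * real t) sequentially"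
    proof (rule analytic[where D = D and l = l and pw = "\<lambda>j x. real_of_int (path_weight A (es j) x)"])
      show "\<And>j. D j \<ge> 0" using Dp by blast
      show "\<And>j x. real_of_int (path_weight A (es j) x) \<ge> - (real x / real (Suc j)) - D j"
        using Dp by simp
      show "\<And>k. real (l k) \<ge> real (Suc k) * (\<Sum>j<Suc (Suc k). D j)" using lp unfolding B_def by blast
      show "\<delta> > 0" by (rule dp)
      fix t
      obtain k m where p: "gpos l t = (k, m)" by fastforce
      have "case gpos l t of (k, m) \<Rightarrow> m < l k \<and> t = (\<Sum>j<k. l j) + m \<and>
        path_weight A (gE es l) t = (\<Sum>j<k. path_weight A (es j) (l j)) + path_weight A (es k) m \<and>
        (\<exists>Y R. fst (cs k m) = Y @ tl (fst (cs k 0)) \<and> Y \<noteq> [] \<and> fst (gC A (gE es l) t) = Y @ R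
        \<and> snd (gC A (gE es l) t) = snd (cs k m))"
        by (rule glue_inv[OF src _ init bnd]) (use lp in blast)
      note C = this[unfolded p prod.case]
      have X: "m < l k \<and> t = (\<Sum>j<k. l j) + m \<and>
        path_weight A E t = (\<Sum>j<k. path_weight A (es j) (l j)) + path_weight A (es k) m"
        using C unfolding E_def by blast
      then have "real_of_int (path_weight A E t) = (\<Sum>j<k. real_of_int (path_weight A (es j) (l j))) + real_of_int (path_weight A (es k) m)"
        by (metis of_int_add of_int_sum)
      then have "m < l k \<and> t = (\<Sum>j<k. l j) + m \<and>
        real_of_int (path_weight A E t) = (\<Sum>j<k. real_of_int (path_weight A (es j) (l j))) + real_of_int (path_weight A (es k) m)"
        using X by blast
      then show "\<exists>k m. m < l k \<and> t = (\<Sum>j<k. l j) + m \<and> real_of_int (path_weight A E t) = (\<Sum>j<k. real_of_int (path_weight A (es j) (l j))) + real_of_int (path_weight A (es k) m)"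
        by blast
    qed
  qed
  then show ?thesis using path by blast
qed

theorem lemma6:
  fixes A :: "('q, 'g) wps"
  assumes "wf_wps A"
  shows "(\<exists>c e. is_path A c e \<and> LimInfAvg A e \<ge> 0) \<longleftrightarrow>
         (\<forall>\<epsilon>::real. \<epsilon> > 0 \<longrightarrow> (\<exists>c e. is_path A c e \<and> LimInfAvg A e > ereal (- \<epsilon>)))"
proof
  assume "\<exists>c e. is_path A c e \<and> LimInfAvg A e \<ge> 0"
  then obtain c e where ce: "is_path A c e" "LimInfAvg A e \<ge> 0" by blast
  show "\<forall>\<epsilon>::real. \<epsilon> > 0 \<longrightarrow> (\<exists>c e. is_path A c e \<and> LimInfAvg A e > ereal (- \<epsilon>))"
  proof (intro allI impI)
    fix \<epsilon> :: real assume "\<epsilon> > 0"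
    then have "ereal (- \<epsilon>) < 0" by simp
    then have "LimInfAvg A e > ereal (- \<epsilon>)" using ce(2) by (rule less_le_trans)
    then show "\<exists>c e. is_path A c e \<and> LimInfAvg A e > ereal (- \<epsilon>)" using ce(1) by blast
  qed
next
  assume "\<forall>\<epsilon>::real. \<epsilon> > 0 \<longrightarrow> (\<exists>c e. is_path A c e \<and> LimInfAvg A e > ereal (- \<epsilon>))"
  then show "\<exists>c e. is_path A c e \<and> LimInfAvg A e \<ge> 0" by (rule hard_dir[OF assms])
qed

end
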